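(* Every reduced spherical curve $P$ has at least one of the following: (i) a bigon; (ii) a trigon $R$ and a region $R'\neq R$ such that $R'$ is a trigon or a $4$-gon and $R'$ shares an edge or a crossing with $R$. Here the regions sharing an edge or a crossing with a trigon are the six regions around it: three share an edge with it, and three are diagonally opposite to it at its crossings.
   Context: A spherical curve is a smooth immersion $P:S^1\to S^2$ whose self-intersections are finitely many transverse double points, called crossings. It has at least one crossing. Regions are the components of $S^2\setminus P(S^1)$, and edges are the arcs of the curve between consecutive crossings. An $n$-gon is a region whose boundary consists of $n$ edges; a bigon is a $2$-gon and a trigon is a $3$-gon. A crossing $p$ is reducible if only three distinct regions (rather than four) meet at $p$; equivalently, no other crossing is interlaced with $p$ in the Gauss word. $P$ is reduced if it has no reducible crossing. *)

theory Defs
  imports "HOL-Combinatorics.Permutations"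
begin

(* Combinatorial encoding of a spherical curve as a 4-regular map on the sphere
   (permutation representation).  Darts = half-edges at crossings.
   alpha : fixed-point-free involution pairing the two half-edges of an edge;
   sigma : cyclic (counterclockwise) rotation of the four half-edges at a crossing;
   the curve goes straight through a crossing: dart d is continued by sigma^2 d;
   regions (faces) are the orbits of sigma o alpha. *)

definition orbit_of :: "('a \<Rightarrow> 'a) \<Rightarrow> 'a \<Rightarrow> 'a set" where
  "orbit_of f x = {(f ^^ n) x | n. True}"

definition crossings :: "'a set \<Rightarrow> ('a \<Rightarrow> 'a) \<Rightarrow> 'a set set" where
  "crossings D sigma = orbit_of sigma ` D"

definition edges :: "'a set \<Rightarrow> ('a \<Rightarrow> 'a) \<Rightarrow> 'a set set" where
  "edges D alpha = orbit_of alpha ` D"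

definition region_of :: "('a \<Rightarrow> 'a) \<Rightarrow> ('a \<Rightarrow> 'a) \<Rightarrow> 'a \<Rightarrow> 'a set" where
  "region_of alpha sigma d = orbit_of (sigma \<circ> alpha) d"

definition regions :: "'a set \<Rightarrow> ('a \<Rightarrow> 'a) \<Rightarrow> ('a \<Rightarrow> 'a) \<Rightarrow> 'a set set" where
  "regions D alpha sigma = region_of alpha sigma ` D"

definition straight :: "('a \<Rightarrow> 'a) \<Rightarrow> ('a \<Rightarrow> 'a) \<Rightarrow> 'a \<Rightarrow> 'a" where
  "straight alpha sigma = (sigma ^^ 2) \<circ> alpha"

definition spherical_curve :: "'a set \<Rightarrow> ('a \<Rightarrow> 'a) \<Rightarrow> ('a \<Rightarrow> 'a) \<Rightarrow> bool" where
  "spherical_curve D alpha sigma \<longleftrightarrow>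
     finite D \<and> D \<noteq> {} \<and>
     alpha permutes D \<and> (\<forall>d\<in>D. alpha d \<noteq> d \<and> alpha (alpha d) = d) \<and>
     sigma permutes D \<and> (\<forall>d\<in>D. card (orbit_of sigma d) = 4) \<and>
     \<comment> \<open>one immersed circle: every half-edge lies on the straight-ahead traversal
         starting from any dart, in one of the two directions\<close>
     (\<forall>d\<in>D. \<forall>e\<in>D. e \<in> orbit_of (straight alpha sigma) d \<or>
                       alpha e \<in> orbit_of (straight alpha sigma) d) \<and>
     \<comment> \<open>the underlying map is on the sphere (Euler characteristic 2)\<close>
     int (card (crossings D sigma)) - int (card (edges D alpha))
       + int (card (regions D alpha sigma)) = 2"

(* regions meeting at the crossing of dart d: one per corner d, sigma d, sigma^2 d, sigma^3 d *)
definition reduced :: "'a set \<Rightarrow> ('a \<Rightarrow> 'a) \<Rightarrow> ('a \<Rightarrow> 'a) \<Rightarrow> bool" where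
  "reduced D alpha sigma \<longleftrightarrow>
     (\<forall>d\<in>D. card (region_of alpha sigma ` orbit_of sigma d) = 4)"

(* an n-gon: a region whose boundary consists of n edges (counted along the boundary) *)
definition is_ngon :: "nat \<Rightarrow> 'a set \<Rightarrow> ('a \<Rightarrow> 'a) \<Rightarrow> ('a \<Rightarrow> 'a) \<Rightarrow> 'a set \<Rightarrow> bool" where
  "is_ngon n D alpha sigma R \<longleftrightarrow> R \<in> regions D alpha sigma \<and> card R = n"

definition share_edge :: "('a \<Rightarrow> 'a) \<Rightarrow> 'a set \<Rightarrow> 'a set \<Rightarrow> bool" where
  "share_edge alpha R R' \<longleftrightarrow> (\<exists>x\<in>R. alpha x \<in> R')"

definition share_crossing :: "('a \<Rightarrow> 'a) \<Rightarrow> 'a set \<Rightarrow> 'a set \<Rightarrow> bool" where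
  "share_crossing sigma R R' \<longleftrightarrow> (\<exists>x\<in>R. \<exists>y\<in>R'. y \<in> orbit_of sigma x)"

end

theory Submission
  imports Defs "HOL-Combinatorics.Orbits"
begin

lemma orb_eq: assumes "f permutes D" "finite D" shows "orbit_of f x = orbit f x"
  unfolding orbit_of_def
  using orbit_altdef_permutation[OF permutes_imp_permutation[OF assms(2,1)]] by simp

lemma orb_self: "x \<in> orbit_of f x"
  unfolding orbit_of_def by (auto intro: exI[of _ 0])

lemma orb_step: "y \<in> orbit_of f x \<Longrightarrow> f y \<in> orbit_of f x"
  proof -
  assume "y \<in> orbit_of f x"
  then obtain n where "y = (f ^^ n) x" unfolding orbit_of_def by auto
  then have "f y = (f ^^ Suc n) x" by simp
  then show ?thesis unfolding orbit_of_def by blast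
qed

lemma orb_sub: assumes "f permutes D" "x \<in> D" shows "orbit_of f x \<subseteq> D"
proof
  fix y assume "y \<in> orbit_of f x"
  then obtain n where "y = (f ^^ n) x" unfolding orbit_of_def by auto
  moreover have "(f ^^ n) x \<in> D" for n
    by (induct n) (auto simp: assms permutes_in_image[OF assms(1)])
  ultimately show "y \<in> D" by simp
qed

lemma orb_class: assumes "f permutes D" "finite D" "y \<in> orbit_of f x"
  shows "orbit_of f y = orbit_of f x"
proof -
  have "cyclic_on f (orbit f x)" by (rule cyclic_on_orbit[OF assms(1,2)])
  moreover have "y \<in> orbit f x" using assms(3) orb_eq[OF assms(1,2)] by simp
  ultimately have "orbit f y = orbit f x" by (rule orbit_cyclic_eq3)
  then show ?thesis using orb_eq[OF assms(1,2)] by simp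
qed

lemma orb4: assumes "f permutes D" "finite D" "card (orbit_of f x) = 4"
  shows "(f ^^ 4) x = x \<and> orbit_of f x = {x, f x, f (f x), f (f (f x))}"
proof -
  have perm: "permutation f" using permutes_imp_permutation[OF assms(2,1)] .
  have xin: "x \<in> orbit f x" using permutation_self_in_orbit[OF perm] .
  define p where "p = funpow_dist1 f x x"
  have o: "orbit f x = (\<lambda>n. (f ^^ n) x) ` {0..<p}"
    unfolding p_def by (rule orbit_conv_funpow_dist1[OF xin])
  have "card (orbit f x) = p"
    unfolding o p_def by (subst card_image[OF inj_on_funpow_dist1[OF xin]]) simp
  then have p4: "p = 4" using assms orb_eq by metis
  have "(f ^^ p) x = x" unfolding p_def by (rule funpow_dist1_prop[OF xin])
  then have a: "(f ^^ 4) x = x" using p4 by simp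
  have "{0..<4::nat} = {0,1,2,3}" by auto
  then have "orbit_of f x = (\<lambda>n. (f ^^ n) x) ` {0,1,2,3::nat}"
    using o p4 orb_eq[OF assms(1,2)] by simp
  also have "\<dots> = {x, f x, f (f x), f (f (f x))}"
    by (simp add: eval_nat_numeral)
  finally show ?thesis using a by simp
qed

lemma sum_partition: assumes "f permutes D" "finite D" "X \<subseteq> D"
  shows "(\<Sum>R\<in>orbit_of f ` D. card (X \<inter> R)) = card X"
proof -
  have "card (\<Union>R\<in>orbit_of f ` D. X \<inter> R) = (\<Sum>R\<in>orbit_of f ` D. card (X \<inter> R))"
  proof (rule card_UN_disjoint)
    show "finite (orbit_of f ` D)" using assms by simp
    show "\<forall>i\<in>orbit_of f ` D. finite (X \<inter> i)" using assms finite_subset by blast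
    show "\<forall>i\<in>orbit_of f ` D. \<forall>j\<in>orbit_of f ` D. i \<noteq> j \<longrightarrow> (X \<inter> i) \<inter> (X \<inter> j) = {}"
    proof (intro ballI impI)
      fix i j assume "i \<in> orbit_of f ` D" "j \<in> orbit_of f ` D" "i \<noteq> j"
      then obtain a b where ab: "i = orbit_of f a" "j = orbit_of f b" by blast
      show "(X \<inter> i) \<inter> (X \<inter> j) = {}"
      proof (rule ccontr)
        assume "(X \<inter> i) \<inter> (X \<inter> j) \<noteq> {}"
        then obtain z where "z \<in> i" "z \<in> j" by blast
        then have "orbit_of f z = i" "orbit_of f z = j"
          using orb_class[OF assms(1,2), of z a] orb_class[OF assms(1,2), of z b] ab by auto
        then show False using \<open>i \<noteq> j\<close> by simp
      qed
    qed
  qed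
  moreover have "(\<Union>R\<in>orbit_of f ` D. X \<inter> R) = X"
    using assms(3) orb_self by fastforce
  ultimately show ?thesis by simp
qed

lemma distinct4: "card {p,q,r,s} = 4 \<Longrightarrow> p \<noteq> q \<and> p \<noteq> r \<and> p \<noteq> s \<and> q \<noteq> r \<and> q \<noteq> s \<and> r \<noteq> s"
proof -
  assume h: "card {p,q,r,s} = 4"
  have c3: "card {a,b,c} \<le> 3" for a b c :: 'a
    by (simp add: card_insert_if)
  show ?thesis
  proof (intro conjI notI)
    assume "p = q" then have "{p,q,r,s} = {q,r,s}" by auto
    then show False using h c3[of q r s] by simp
  next
    assume "p = r" then have "{p,q,r,s} = {q,r,s}" by auto
    then show False using h c3[of q r s] by simp
  next
    assume "p = s" then have "{p,q,r,s} = {q,r,s}" by auto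
    then show False using h c3[of q r s] by simp
  next
    assume "q = r" then have "{p,q,r,s} = {p,r,s}" by auto
    then show False using h c3[of p r s] by simp
  next
    assume "q = s" then have "{p,q,r,s} = {p,r,s}" by auto
    then show False using h c3[of p r s] by simp
  next
    assume "r = s" then have "{p,q,r,s} = {p,q,s}" by auto
    then show False using h c3[of p q s] by simp
  qed
qed


lemma orb_inv: assumes "f permutes D" "\<forall>d\<in>D. f d \<noteq> d \<and> f (f d) = d" "d \<in> D"
  shows "card (orbit_of f d) = 2"
proof -
  have "(f ^^ n) d \<in> {d, f d}" for n
    by (induct n) (use assms in auto)
  then have "orbit_of f d \<subseteq> {d, f d}" unfolding orbit_of_def by auto
  moreover have "{d, f d} \<subseteq> orbit_of f d" using orb_self[of d f] orb_step[OF orb_self, of f d] by auto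
  ultimately have "orbit_of f d = {d, f d}" by blast
  then show ?thesis using assms by auto
qed

theorem mainTheorem8:
  fixes D :: "'a set" and alpha sigma :: "'a \<Rightarrow> 'a"
  assumes "spherical_curve D alpha sigma"
    and "reduced D alpha sigma"
  shows "(\<exists>R. is_ngon 2 D alpha sigma R) \<or>
         (\<exists>R R'. is_ngon 3 D alpha sigma R \<and> R' \<in> regions D alpha sigma \<and> R' \<noteq> R \<and>
             (is_ngon 3 D alpha sigma R' \<or> is_ngon 4 D alpha sigma R') \<and>
             (share_edge alpha R R' \<or> share_crossing sigma R R'))"
proof (rule ccontr)
  assume neg: "\<not> ?thesis"
  define phi where "phi = sigma \<circ> alpha"
  from assms(1) have fin: "finite D" and aperm: "alpha permutes D"
    and ainv: "\<forall>d\<in>D. alpha d \<noteq> d \<and> alpha (alpha d) = d"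
    and sperm: "sigma permutes D" and s4: "\<forall>d\<in>D. card (orbit_of sigma d) = 4"
    and euler: "int (card (crossings D sigma)) - int (card (edges D alpha))
       + int (card (regions D alpha sigma)) = 2"
    unfolding spherical_curve_def by auto
  have pperm: "phi permutes D" unfolding phi_def using permutes_compose[OF aperm sperm] .
  define reg where "reg = region_of alpha sigma"
  have reg_eq: "reg = orbit_of phi" unfolding reg_def phi_def by (rule ext) (simp add: region_of_def)
  have RS: "regions D alpha sigma = reg ` D" unfolding regions_def reg_def by simp
  have ngon: "is_ngon n D alpha sigma R \<longleftrightarrow> R \<in> reg ` D \<and> card R = n" for n R
    unfolding is_ngon_def RS ..
  have regcl: "x \<in> reg y \<Longrightarrow> reg x = reg y" for x y
    unfolding reg_eq by (rule orb_class[OF pperm fin])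
  have regself: "x \<in> reg x" for x unfolding reg_eq by (rule orb_self)
  have regstep: "x \<in> reg y \<Longrightarrow> phi x \<in> reg y" for x y unfolding reg_eq by (rule orb_step)
  have regD: "y \<in> D \<Longrightarrow> reg y \<subseteq> D" for y unfolding reg_eq by (rule orb_sub[OF pperm])
  have regfin: "y \<in> D \<Longrightarrow> finite (reg y)" for y using regD fin finite_subset by blast
  have s4': "y \<in> D \<Longrightarrow> (sigma ^^ 4) y = y \<and>
      orbit_of sigma y = {y, sigma y, sigma (sigma y), sigma (sigma (sigma y))}" for y
    using orb4[OF sperm fin] s4 by blast
  have sig4: "y \<in> D \<Longrightarrow> sigma (sigma (sigma (sigma y))) = y" for y
    using s4' by (simp add: eval_nat_numeral)
  have sD: "y \<in> D \<Longrightarrow> sigma y \<in> D" for y using permutes_in_image[OF sperm] by blast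
  have aD: "y \<in> D \<Longrightarrow> alpha y \<in> D" for y using permutes_in_image[OF aperm] by blast
  have F1: "reg (sigma x) = reg (alpha x)" if "x \<in> D" for x
  proof -
    have "phi (alpha x) = sigma x" using ainv that unfolding phi_def by simp
    then have "sigma x \<in> reg (alpha x)" using regstep[OF regself, of "alpha x"] by simp
    then show ?thesis by (rule regcl)
  qed
  have F2: "reg y \<noteq> reg (sigma y) \<and> reg y \<noteq> reg (sigma (sigma y)) \<and> reg y \<noteq> reg (sigma (sigma (sigma y)))
      \<and> reg (sigma y) \<noteq> reg (sigma (sigma y)) \<and> reg (sigma y) \<noteq> reg (sigma (sigma (sigma y)))
      \<and> reg (sigma (sigma y)) \<noteq> reg (sigma (sigma (sigma y)))" if "y \<in> D" for y
  proof -
    have "card (reg ` orbit_of sigma y) = 4" using assms(2) that unfolding reduced_def reg_def by blast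
    then have "card {reg y, reg (sigma y), reg (sigma (sigma y)), reg (sigma (sigma (sigma y)))} = 4"
      using s4'[OF that] by simp
    from distinct4[OF this] show ?thesis .
  qed
  have nobigon: "R \<in> reg ` D \<Longrightarrow> card R \<noteq> 2" for R using neg unfolding ngon by blast
  have noadj: "False" if "R \<in> reg ` D" "card R = 3" "R' \<in> reg ` D" "R' \<noteq> R"
      "card R' = 3 \<or> card R' = 4" "share_edge alpha R R' \<or> share_crossing sigma R R'" for R R'
    using neg that unfolding ngon RS by blast
  have ge3: "card (reg y) \<ge> 3" if "y \<in> D" for y
  proof -
    have "card (reg y) \<noteq> 0" using regfin[OF that] regself[of y] by auto
    moreover have "card (reg y) \<noteq> 1"
    proof
      assume "card (reg y) = 1"
      then have "reg y = {y}" using regself[of y] by (auto simp: card_1_singleton_iff)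
      then have "phi y = y" using regstep[OF regself, of y] by simp
      then have sz: "sigma (alpha y) = y" unfolding phi_def by simp
      have "reg (sigma y) = reg (alpha y)" by (rule F1[OF that])
      moreover have "sigma y = sigma (sigma (alpha y))" using sz by simp
      ultimately have "reg (sigma (sigma (alpha y))) = reg (alpha y)" by simp
      then show False using F2[OF aD[OF that]] by simp
    qed
    moreover have "card (reg y) \<noteq> 2" using nobigon that by blast
    ultimately show ?thesis by linarith
  qed
  define T where "T = {x \<in> D. card (reg x) = 3}"
  define S where "S = {x \<in> D. alpha x \<in> T}"
  have K1: "card (reg x) \<ge> 5" if "x \<in> S" for x
  proof -
    have xD: "x \<in> D" and A3: "card (reg (alpha x)) = 3" using that unfolding S_def T_def by auto
    have "reg x \<noteq> reg (alpha x)" using F1[OF xD] F2[OF xD] by simp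
    moreover have "share_edge alpha (reg (alpha x)) (reg x)"
      unfolding share_edge_def using regself[of "alpha x"] regself[of x] ainv xD
      by (intro bexI[of _ "alpha x"]) auto
    ultimately have "card (reg x) \<noteq> 3 \<and> card (reg x) \<noteq> 4"
      using noadj[of "reg (alpha x)" "reg x"] A3 aD[OF xD] xD by blast
    then show ?thesis using ge3[OF xD] by linarith
  qed
  have K2: False if "x \<in> S" "phi x \<in> S" for x
  proof -
    define y where "y = sigma (alpha x)"
    have xD: "x \<in> D" and A3: "card (reg (alpha x)) = 3" using that(1) unfolding S_def T_def by auto
    have yD: "y \<in> D" and B3: "card (reg (alpha y)) = 3" using that(2) unfolding S_def T_def y_def phi_def by auto
    have "reg (sigma y) = reg (alpha y)" by (rule F1[OF yD])
    have "sigma (sigma (sigma y)) = alpha x" unfolding y_def using sig4[OF aD[OF xD]] .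
    then have ne: "reg (alpha y) \<noteq> reg (alpha x)" using F2[OF yD] F1[OF yD] by metis
    have "sigma y \<in> reg (alpha y)" using F1[OF yD] regself[of "sigma y"] by simp
    moreover have "alpha x \<in> reg (alpha x)" by (rule regself)
    moreover have "alpha x \<in> orbit_of sigma (sigma y)"
      using orb_step[OF orb_step[OF orb_self]] \<open>sigma (sigma (sigma y)) = alpha x\<close> by metis
    ultimately have "share_crossing sigma (reg (alpha y)) (reg (alpha x))"
      unfolding share_crossing_def by blast
    then show False using noadj[of "reg (alpha y)" "reg (alpha x)"] A3 B3 ne aD[OF xD] aD[OF yD] by blast
  qed
  have half: "2 * card (S \<inter> R) \<le> card R" if Rin: "R \<in> reg ` D" for R
  proof -
    obtain d where dD: "d \<in> D" and Rd: "R = reg d" using Rin by blast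
    have finR: "finite R" using regfin dD Rd by simp
    have "phi ` (S \<inter> R) \<subseteq> R - S" using regstep K2 Rd by blast
    moreover have "inj_on phi (S \<inter> R)" using permutes_inj_on[OF pperm] .
    ultimately have "card (S \<inter> R) \<le> card (R - S)"
      using card_inj_on_le finR by (metis finite_Diff)
    moreover have "card (R - S) = card R - card (S \<inter> R)"
      using finR by (simp add: card_Diff_subset_Int Int_commute)
    moreover have "card (S \<inter> R) \<le> card R" using finR by (simp add: card_mono)
    ultimately show ?thesis by linarith
  qed
  have SD: "S \<subseteq> D" and TD: "T \<subseteq> D" unfolding S_def T_def by auto
  have sumpart: "(\<Sum>R\<in>reg ` D. card (X \<inter> R)) = card X" if "X \<subseteq> D" for X
    unfolding reg_eq by (rule sum_partition[OF pperm fin that])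
  have sumD: "(\<Sum>R\<in>reg ` D. int (card R)) = int (card D)"
  proof -
    have "(\<Sum>R\<in>reg ` D. card R) = (\<Sum>R\<in>reg ` D. card (D \<inter> R))"
      by (rule sum.cong) (use regD in \<open>auto simp: Int_absorb1\<close>)
    then show ?thesis using sumpart[of D] by (simp flip: of_nat_sum)
  qed
  have sumS: "(\<Sum>R\<in>reg ` D. int (card (S \<inter> R))) = int (card S)"
    using sumpart[OF SD] by (simp flip: of_nat_sum)
  have sumT: "(\<Sum>R\<in>reg ` D. (if card R = 3 then 3 else 0 :: int)) = int (card T)"
  proof -
    have "(\<Sum>R\<in>reg ` D. (if card R = 3 then 3 else 0 :: int)) = (\<Sum>R\<in>reg ` D. int (card (T \<inter> R)))"
    proof (rule sum.cong)
      fix R assume "R \<in> reg ` D"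
      then obtain d where dD: "d \<in> D" and Rd: "R = reg d" by blast
      have "T \<inter> R = (if card R = 3 then R else {})"
        unfolding T_def using regD[OF dD] regcl Rd by auto
      then show "(if card R = 3 then 3 else 0 :: int) = int (card (T \<inter> R))" by auto
    qed simp
    then show ?thesis using sumpart[OF TD] by (simp flip: of_nat_sum)
  qed
  have ST: "card S = card T"
  proof -
    have "S = alpha ` T"
    proof
      show "S \<subseteq> alpha ` T"
      proof
        fix x assume "x \<in> S"
        then have "x = alpha (alpha x)" "alpha x \<in> T" using ainv unfolding S_def by auto
        then show "x \<in> alpha ` T" by blast
      qed
      show "alpha ` T \<subseteq> S" using ainv aD unfolding S_def T_def by auto
    qed
    then show ?thesis using card_image[OF permutes_inj_on[OF aperm]] by simp
  qed
  have cross: "card D = 4 * card (crossings D sigma)"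
  proof -
    have "(\<Sum>C\<in>orbit_of sigma ` D. card (D \<inter> C)) = card D" by (rule sum_partition[OF sperm fin order_refl])
    moreover have "(\<Sum>C\<in>orbit_of sigma ` D. card (D \<inter> C)) = (\<Sum>C\<in>orbit_of sigma ` D. 4)"
      by (rule sum.cong) (use orb_sub[OF sperm] s4 in \<open>auto simp: Int_absorb1\<close>)
    ultimately show ?thesis unfolding crossings_def by simp
  qed
  have edg: "card D = 2 * card (edges D alpha)"
  proof -
    have "(\<Sum>C\<in>orbit_of alpha ` D. card (D \<inter> C)) = card D" by (rule sum_partition[OF aperm fin order_refl])
    moreover have "(\<Sum>C\<in>orbit_of alpha ` D. card (D \<inter> C)) = (\<Sum>C\<in>orbit_of alpha ` D. 2)"
      by (rule sum.cong) (use orb_sub[OF aperm] orb_inv[OF aperm ainv] in \<open>auto simp: Int_absorb1\<close>)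
    ultimately show ?thesis unfolding edges_def by simp
  qed
  define F where "F = card (reg ` D)"
  have eul: "12 * int F - 3 * int (card D) = 24"
    using euler cross edg unfolding F_def RS by linarith
  define q where "q R = 3 * (4 - int (card R)) + int (card (S \<inter> R)) - (if card R = 3 then 3 else 0 :: int)" for R
  have sumq: "(\<Sum>R\<in>reg ` D. q R) = 12 * int F - 3 * (\<Sum>R\<in>reg ` D. int (card R))
      + (\<Sum>R\<in>reg ` D. int (card (S \<inter> R))) - (\<Sum>R\<in>reg ` D. (if card R = 3 then 3 else 0 :: int))"
    unfolding q_def F_def by (simp add: sum.distrib sum_subtractf sum_distrib_left algebra_simps)
  have qle: "q R \<le> 0" if Rin: "R \<in> reg ` D" for R
  proof -
    obtain d where dD: "d \<in> D" and Rd: "R = reg d" using Rin by blast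
    have c3: "card R \<ge> 3" using ge3[OF dD] Rd by simp
    show ?thesis
    proof (cases "card R \<le> 4")
      case True
      have "S \<inter> R = {}"
      proof (rule ccontr)
        assume "S \<inter> R \<noteq> {}"
        then obtain x where "x \<in> S" "x \<in> R" by blast
        then have "reg x = R" using regcl Rd by simp
        then show False using K1[OF \<open>x \<in> S\<close>] True by simp
      qed
      then show ?thesis unfolding q_def using True c3 by auto
    next
      case False
      then show ?thesis unfolding q_def using half[OF Rin] by simp
    qed
  qed
  have "(\<Sum>R\<in>reg ` D. q R) \<le> 0" using qle by (simp add: sum_nonpos)
  moreover have "(\<Sum>R\<in>reg ` D. q R) = 24" using sumq sumD sumS sumT ST eul by simp
  ultimately show False by simp
qed

end
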